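(* Let $H=\langle a_1,\dots,a_\ell\rangle$ with $\ell\ge3$ and $a_j\notin\langle a_1,\dots,\widehat{a_j},\dots,a_\ell\rangle$ for all $j$, and let $R=k[[H]]$. Assume $\mathrm r(R)=2$, so that $\mathrm{PF}(H)=\{c,f\}$ with $c<f$, and put $a=f-c>0$, so that the fractional canonical ideal is $K=R+Rt^a$. Then $R$ is a $2$-AGL ring if and only if $3a\in H$ and $f=2a+a_i$ for some $1\le i\le\ell$.
   Context: $k$ is a field, $V=k[[t]]$. For positive integers $a_1,\dots,a_\ell$ with $\gcd=1$, $H=\langle a_1,\dots,a_\ell\rangle=\{\sum c_ia_i: c_i\in\mathbb Z_{\ge0}\}$ is a numerical semigroup and $R=k[[H]]=k[[t^{a_1},\dots,t^{a_\ell}]]\subseteq V$, a one-dimensional Cohen–Macaulay local domain. $f=\mathrm f(H)=\max(\mathbb Z\setminus H)$ is the Frobenius number, $\mathrm{PF}(H)=\{n\in\mathbb Z\setminus H: n+a_i\in H \text{ for all } i\}$ the pseudo-Frobenius numbers; $\mathrm r(R)=\#\mathrm{PF}(H)$. The fractional canonical ideal is $K=\sum_{c\in\mathrm{PF}(H)}Rt^{f-c}$; $K\cong\mathrm K_R$, $R\subseteq K\subseteq V$. With $S=R[K]$, $R$ is $2$-AGL iff $\ell_R(S/K)=2$ (equivalently, the Sally module of a canonical ideal $t^NK\subseteq R$ with respect to the reduction $(t^N)$ has rank $2$). *)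

theory Defs
  imports Main
begin

inductive_set gen_monoid :: "int set \<Rightarrow> int set" for A :: "int set" where
  zero: "0 \<in> gen_monoid A"
| add: "x \<in> gen_monoid A \<Longrightarrow> y \<in> A \<Longrightarrow> x + y \<in> gen_monoid A"

definition sgp :: "nat list \<Rightarrow> int set" where
  "sgp as = gen_monoid (int ` set as)"

definition PF :: "nat list \<Rightarrow> int set" where
  "PF as = {n. n \<notin> sgp as \<and> (\<forall>i<length as. n + int (as ! i) \<in> sgp as)}"

definition frob :: "nat list \<Rightarrow> int" where
  "frob as = (GREATEST n. n \<notin> sgp as)"

text \<open>Value set (set of exponents of monomials) of the fractional canonical ideal
  K = sum over c in PF(H) of R t^(f-c).\<close>
definition Kvals :: "nat list \<Rightarrow> int set" where
  "Kvals as = (\<Union>c\<in>PF as. (\<lambda>h. frob as - c + h) ` sgp as)"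

text \<open>Value set of S = R[K] = union of the powers K^n: all finite sums of
  elements of the value set of K.\<close>
definition Svals :: "nat list \<Rightarrow> int set" where
  "Svals as = gen_monoid (Kvals as)"

text \<open>R = k[[H]] is 2-AGL iff length_R(S/K) = 2; since S and K are monomial
  modules, length_R(S/K) = dim_k(S/K) = number of exponents of S not in K.\<close>
definition two_AGL :: "nat list \<Rightarrow> bool" where
  "two_AGL as \<longleftrightarrow> card (Svals as - Kvals as) = 2"

end

theory Submission imports Defs begin
lemma gm_base: "y \<in> A \<Longrightarrow> y \<in> gen_monoid A"
  using gen_monoid.add[OF gen_monoid.zero] by fastforce

lemma gm_add: "y \<in> gen_monoid A \<Longrightarrow> x \<in> gen_monoid A \<Longrightarrow> x + y \<in> gen_monoid A"
proof (induction y rule: gen_monoid.induct)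
  case zero then show ?case by simp
next
  case (add y z)
  then have "x + y \<in> gen_monoid A" by simp
  then have "(x + y) + z \<in> gen_monoid A" using add.hyps(2) by (rule gen_monoid.add)
  then show ?case by (simp add: add.assoc)
qed

lemma gm_mult: "x \<in> gen_monoid A \<Longrightarrow> of_nat n * x \<in> gen_monoid A"
  by (induction n) (auto simp: distrib_right intro: gm_add gen_monoid.zero)

lemma gm_mult_int: "x \<in> gen_monoid A \<Longrightarrow> (k::int) \<ge> 0 \<Longrightarrow> k * x \<in> gen_monoid A"
  using gm_mult[of x A "nat k"] by simp

lemma sgp_nonneg: "x \<in> sgp as \<Longrightarrow> x \<ge> 0"
  unfolding sgp_def by (induction rule: gen_monoid.induct) auto

lemma sgp_gen: "i < length as \<Longrightarrow> int (as!i) \<in> sgp as"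
  unfolding sgp_def by (rule gm_base) auto

lemma sgp_add: "x \<in> sgp as \<Longrightarrow> y \<in> sgp as \<Longrightarrow> x + y \<in> sgp as"
  unfolding sgp_def using gm_add by blast

lemma sgp_zero: "0 \<in> sgp as" unfolding sgp_def by (rule gen_monoid.zero)

lemma sgp_mult: "x \<in> sgp as \<Longrightarrow> (k::int) \<ge> 0 \<Longrightarrow> k * x \<in> sgp as"
  unfolding sgp_def using gm_mult_int by blast

lemma D_mult:
  assumes "u \<in> sgp as" "v \<in> sgp as"
  shows "\<exists>u' v'. u' \<in> sgp as \<and> v' \<in> sgp as \<and> (k::int) * (u - v) = u' - v'"
proof (cases "k \<ge> 0")
  case True then show ?thesis using assms
    by (intro exI[of _ "k*u"] exI[of _ "k*v"]) (auto simp: right_diff_distrib intro: sgp_mult)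
next
  case False
  then have "(-k)*v \<in> sgp as" "(-k)*u \<in> sgp as" using assms sgp_mult[of _ as "-k"] by auto
  moreover have "k * (u - v) = (-k)*v - (-k)*u" by (simp add: algebra_simps)
  ultimately show ?thesis by blast
qed

lemma gcd_in_diff:
  assumes "set xs \<subseteq> set as"
  shows "\<exists>u v. u \<in> sgp as \<and> v \<in> sgp as \<and> int (Gcd (set xs)) = u - v"
using assms proof (induction xs)
  case Nil
  then show ?case using sgp_zero by force
next
  case (Cons x xs)
  then obtain u v where uv: "u \<in> sgp as" "v \<in> sgp as" "int (Gcd (set xs)) = u - v" by auto
  have xin: "int x \<in> sgp as" using Cons.prems unfolding sgp_def by (auto intro: gm_base)
  obtain p q where pq: "p * int x + q * int (Gcd (set xs)) = gcd (int x) (int (Gcd (set xs)))"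
    using bezout_int by blast
  have g1: "int (Gcd (set (x#xs))) = gcd (int x) (int (Gcd (set xs)))"
    by (simp add: gcd_int_int_eq)
  have eq: "int (Gcd (set (x#xs))) = p * (int x - 0) + q * (u - v)"
    unfolding g1 uv(3) pq[unfolded uv(3), symmetric] by simp
  obtain u1 v1 where 1: "u1 \<in> sgp as" "v1 \<in> sgp as" "p * (int x - 0) = u1 - v1"
    using D_mult[OF xin sgp_zero] by blast
  obtain u2 v2 where 2: "u2 \<in> sgp as" "v2 \<in> sgp as" "q * (u - v) = u2 - v2"
    using D_mult[OF uv(1,2)] by blast
  show ?case
    by (rule exI[of _ "u1+u2"], rule exI[of _ "v1+v2"]) (use 1 2 eq sgp_add in auto)
qed

lemma frob_exists:
  assumes pos: "\<forall>i<length as. 0 < as ! i" and gcd1: "Gcd (set as) = 1" and ne: "as \<noteq> []"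
  shows "\<exists>N. \<forall>z\<ge>N. z \<in> sgp as"
proof -
  obtain u v where uv: "u \<in> sgp as" "v \<in> sgp as" "1 = u - v"
    using gcd_in_diff[of as as] gcd1 by auto
  define m where "m = int (as!0)"
  have m: "m \<in> sgp as" "m > 0" using sgp_gen pos ne unfolding m_def by auto
  show ?thesis
  proof (intro exI allI impI)
    fix z assume z: "z \<ge> (m-1)*v"
    define q where "q = (z - (m-1)*v) div m"
    define r where "r = (z - (m-1)*v) mod m"
    have q0: "q \<ge> 0" using z m unfolding q_def by (simp add: pos_imp_zdiv_nonneg_iff)
    have r0: "0 \<le> r" "r < m" using m unfolding r_def by auto
    have e1: "z - (m-1)*v = q*m + r" unfolding q_def r_def by (simp add: mult.commute)
    have uu: "u = v + 1" using uv(3) by simp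
    have e2: "r*u + (m-1-r)*v = r + (m-1)*v" unfolding uu by (simp add: algebra_simps)
    have eq: "z = q*m + r*u + (m-1-r)*v" using e1 e2 by linarith
    have "q*m \<in> sgp as" "r*u \<in> sgp as" "(m-1-r)*v \<in> sgp as"
      using sgp_mult q0 r0 m uv by auto
    then show "z \<in> sgp as" unfolding eq using sgp_add by blast
  qed
qed

lemma frob_props:
  assumes N: "\<forall>z\<ge>N. z \<in> sgp as"
  shows "frob as \<notin> sgp as \<and> (\<forall>z > frob as. z \<in> sgp as)"
proof -
  define A where "A = {z \<in> {-1..N}. z \<notin> sgp as}"
  have m1: "-1 \<notin> sgp as" using sgp_nonneg by force
  have m1A: "-1 \<in> A" using N m1 unfolding A_def by (cases "-1 \<le> N") auto
  have fin: "finite A" by (rule finite_subset[of A "{-1..N}"]) (auto simp: A_def)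
  define F where "F = Max A"
  have FA: "F \<in> A" using fin m1A unfolding F_def by (auto intro: Max_in)
  have Fge: "F \<ge> -1" using Max_ge[OF fin m1A] F_def by simp
  have upper: "y \<le> F" if "y \<notin> sgp as" for y
  proof -
    have "y \<le> N" using N that by (meson linorder_le_cases)
    show ?thesis
    proof (cases "y \<ge> -1")
      case True then have "y \<in> A" using \<open>y \<le> N\<close> that A_def by simp
      then show ?thesis by (simp add: F_def fin Max_ge)
    next
      case False then show ?thesis using Fge by simp
    qed
  qed
  have "frob as = F" unfolding frob_def using FA upper unfolding A_def
    by (intro Greatest_equality) auto
  then show ?thesis using FA upper A_def by force
qed

lemma PF_shift:
  assumes "c \<in> PF as" "h \<in> sgp as" "h \<noteq> 0"
  shows "c + h \<in> sgp as"
proof -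
  have "h \<in> gen_monoid (int ` set as)" using assms(2) sgp_def by simp
  then show ?thesis using assms(3)
  proof (induction h rule: gen_monoid.induct)
    case zero then show ?case by simp
  next
    case (add x y)
    from add.hyps(2) obtain i where i: "i < length as" "y = int (as!i)" by (auto simp: in_set_conv_nth)
    show ?case
    proof (cases "x = 0")
      case True then show ?thesis using assms(1) i unfolding PF_def by auto
    next
      case False
      then have "c + x \<in> sgp as" using add.IH by simp
      moreover have "y \<in> sgp as" using i sgp_gen by simp
      ultimately show ?thesis using sgp_add[of "c+x" as y] by (simp add: add.assoc)
    qed
  qed
qed

lemma gap_below_PF:
  assumes pos: "\<forall>i<length as. 0 < as ! i"
    and fr: "\<forall>z > f. z \<in> sgp as"
    and g: "g \<notin> sgp as"
  shows "\<exists>p\<in>PF as. p - g \<in> sgp as"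
proof -
  define A where "A = {p. p \<notin> sgp as \<and> p - g \<in> sgp as}"
  have sub: "A \<subseteq> {g..f}"
  proof
    fix p assume "p \<in> A"
    then have "p \<notin> sgp as" "p - g \<ge> 0" using sgp_nonneg[of "p-g" as] A_def by auto
    then show "p \<in> {g..f}" using fr by force
  qed
  have fin: "finite A" using finite_subset[OF sub] by simp
  have gA: "g \<in> A" unfolding A_def using g sgp_zero by simp
  define p where "p = Max A"
  have pA: "p \<in> A" using Max_in fin gA p_def by auto
  have "p \<in> PF as"
    unfolding PF_def
  proof (intro CollectI conjI allI impI)
    show "p \<notin> sgp as" using pA A_def by simp
    fix i assume i: "i < length as"
    show "p + int (as!i) \<in> sgp as"
    proof (rule ccontr)
      assume nin: "p + int (as ! i) \<notin> sgp as"
      have "(p - g) + int (as!i) \<in> sgp as"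
        using pA sgp_gen[OF i] sgp_add unfolding A_def by blast
      then have "p + int (as!i) - g \<in> sgp as" by (simp add: algebra_simps)
      then have "p + int (as!i) \<in> A" using nin A_def by simp
      then have "p + int (as!i) \<le> p" using Max_ge[OF fin] p_def by blast
      then show False using pos i by force
    qed
  qed
  then show ?thesis using pA A_def by auto
qed

lemma atom_gen:
  assumes pos: "\<forall>i<length as. 0 < as ! i"
    and b: "b \<in> sgp as" "b \<noteq> 0"
    and atom: "\<forall>h\<in>sgp as. b - h \<in> sgp as \<longrightarrow> h = 0 \<or> h = b"
  shows "\<exists>i<length as. b = int (as!i)"
proof -
  from b have "b \<in> gen_monoid (int ` set as)" by (simp add: sgp_def)
  then show ?thesis
  proof (cases rule: gen_monoid.cases)
    case zero then show ?thesis using b by simp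
  next
    case (add x y)
    from add(3) obtain i where i: "i < length as" "y = int (as!i)" by (auto simp: in_set_conv_nth)
    have "y \<in> sgp as" using i sgp_gen by simp
    moreover have "b - y \<in> sgp as" using add by (simp add: sgp_def)
    ultimately have "y = 0 \<or> y = b" using atom by blast
    then show ?thesis using i pos by auto
  qed
qed

lemma below_gen:
  assumes i: "i < length as" and z: "z \<in> sgp as" "z < int (as!i)"
  shows "z \<in> sgp (take i as @ drop (Suc i) as)"
proof -
  have sa: "set as = set (take i as @ drop (Suc i) as) \<union> {as!i}"
    using id_take_nth_drop[OF i] by (metis Un_insert_right insert_is_Un list.simps(15) set_append sup_commute)
  from z have "z \<in> gen_monoid (int ` set as)" by (simp add: sgp_def)
  then show ?thesis using z(2)
  proof (induction z rule: gen_monoid.induct)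
    case zero then show ?case by (simp add: sgp_zero)
  next
    case (add x y)
    have x0: "x \<ge> 0" using add.hyps(1) sgp_nonneg sgp_def by blast
    have y0: "y \<ge> 0" using add.hyps(2) by auto
    have "x \<in> sgp (take i as @ drop (Suc i) as)" using add x0 y0 by simp
    moreover have "y \<in> int ` set (take i as @ drop (Suc i) as)"
      using add.hyps(2) add.prems x0 sa by auto
    ultimately show ?case unfolding sgp_def by (rule gen_monoid.add)
  qed
qed

lemma gen_atom:
  assumes i: "i < length as"
    and min: "int (as!i) \<notin> sgp (take i as @ drop (Suc i) as)"
    and h: "h \<in> sgp as" "int (as!i) - h \<in> sgp as"
  shows "h = 0 \<or> h = int (as!i)"
proof (rule ccontr)
  assume nt: "\<not> ?thesis"
  have "h \<ge> 0" "int (as!i) - h \<ge> 0" using sgp_nonneg[OF h(1)] sgp_nonneg[OF h(2)] by auto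
  then have lt: "h < int (as!i)" "int (as!i) - h < int (as!i)" using nt by auto
  have "h + (int (as!i) - h) \<in> sgp (take i as @ drop (Suc i) as)"
    using below_gen[OF i h(1) lt(1)] below_gen[OF i h(2) lt(2)] sgp_add by blast
  then show False using min by simp
qed

theorem theorem6p2:
  fixes as :: "nat list" and c :: int
  assumes pos: "\<forall>i<length as. 0 < as ! i"
    and gcd1: "Gcd (set as) = 1"
    and len: "length as \<ge> 3"
    and minimal: "\<forall>j<length as.
        int (as ! j) \<notin> sgp (take j as @ drop (Suc j) as)"
    and type2: "card (PF as) = 2"
    and cPF: "c \<in> PF as"
    and cf: "c < frob as"
  shows "two_AGL as \<longleftrightarrow>
           3 * (frob as - c) \<in> sgp as \<and>
           (\<exists>i<length as. frob as = 2 * (frob as - c) + int (as ! i))"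
proof -
  define H where "H = sgp as"
  define f where "f = frob as"
  define a where "a = f - c"
  have ne: "as \<noteq> []" using len by auto
  obtain N where N: "\<forall>z\<ge>N. z \<in> sgp as" using frob_exists[OF pos gcd1 ne] by auto
  have fnot: "f \<notin> H" and fabove: "\<forall>z>f. z \<in> H" using frob_props[OF N] f_def H_def by auto
  have a0: "a > 0" using cf a_def f_def by simp
  have fPF: "f \<in> PF as" unfolding PF_def using fnot fabove pos H_def by force
  have PFeq: "PF as = {c, f}"
  proof -
    have fin: "finite (PF as)" using type2 card.infinite by fastforce
    have "{c,f} \<subseteq> PF as" using cPF fPF by auto
    moreover have "card {c,f} = 2" using cf f_def by simp
    ultimately show ?thesis using card_subset_eq[OF fin] type2 by metis
  qed
  have Kdef: "Kvals as = H \<union> (\<lambda>h. a + h) ` H"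
    unfolding Kvals_def PFeq a_def f_def H_def by auto
  have cH: "c \<notin> H" using cPF PF_def H_def by simp
  have Hnn: "x \<in> H \<Longrightarrow> x \<ge> 0" for x using sgp_nonneg H_def by blast
  have Hadd: "x \<in> H \<Longrightarrow> y \<in> H \<Longrightarrow> x + y \<in> H" for x y using sgp_add H_def by blast
  have H0: "0 \<in> H" using sgp_zero H_def by blast
  have aH: "a \<notin> H"
  proof
    assume "a \<in> H"
    then have "c + a \<in> H" using PF_shift[OF cPF] a0 H_def by simp
    then show False using fnot a_def by simp
  qed
  have notK: "x \<notin> Kvals as" if "f - x \<in> H" for x
  proof
    assume "x \<in> Kvals as"
    then consider "x \<in> H" | h where "h \<in> H" "x = a + h" using Kdef by auto
    then show False
    proof cases
      case 1 then have "x + (f - x) \<in> H" using Hadd that by blast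
      then show False using fnot by simp
    next
      case 2 then have "h + (f - x) \<in> H" using Hadd that by blast
      moreover have "h + (f - x) = c" using 2 a_def by simp
      ultimately show False using cH by simp
    qed
  qed
  have inK: "x \<in> Kvals as" if nx: "f - x \<notin> H" for x
  proof -
    obtain p where p: "p \<in> PF as" "p - (f - x) \<in> H"
      using gap_below_PF[OF pos, of f "f - x"] fabove nx H_def by auto
    then have "p = c \<or> p = f" using PFeq by auto
    then show ?thesis
    proof
      assume "p = c"
      then have "x = a + (p - (f - x))" using a_def by simp
      then show ?thesis using Kdef p(2) by blast
    next
      assume "p = f"
      then have "x = p - (f - x)" by simp
      then show ?thesis using Kdef p(2) by auto
    qed
  qed
  have Kchar: "x \<in> Kvals as \<longleftrightarrow> f - x \<notin> H" for x using notK inK by blast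
  have KS: "Kvals as \<subseteq> Svals as" unfolding Svals_def using gm_base by blast
  have Sadd: "x \<in> Svals as \<Longrightarrow> y \<in> Svals as \<Longrightarrow> x + y \<in> Svals as" for x y
    unfolding Svals_def using gm_add by blast
  have aK: "a + h \<in> Kvals as" if "h \<in> H" for h using Kdef that by blast
  have HK: "h \<in> Kvals as" if "h \<in> H" for h using Kdef that by blast
  have S2: "2*a + h \<in> Svals as" if "h \<in> H" for h
  proof -
    have k1: "a + 0 \<in> Svals as" using KS aK[OF H0] by blast
    have k2: "a + h \<in> Svals as" using KS aK[OF that] by blast
    have "(a + 0) + (a + h) \<in> Svals as" by (rule Sadd[OF k1 k2])
    then show ?thesis by (simp add: algebra_simps)
  qed
  have S3: "3*a \<in> Svals as"
  proof -
    have k1: "a + 0 \<in> Svals as" using KS aK[OF H0] by blast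
    have "(2*a + 0) + (a + 0) \<in> Svals as" by (rule Sadd[OF S2[OF H0] k1])
    then show ?thesis by simp
  qed
  have ST: "x \<in> H \<or> x - a \<in> H \<or> x - 2*a \<in> H" if a3: "3*a \<in> H" and xS: "x \<in> Svals as" for x
  proof -
    from xS have "x \<in> gen_monoid (Kvals as)" by (simp add: Svals_def)
    then show ?thesis
    proof (induction x rule: gen_monoid.induct)
      case zero then show ?case using H0 by simp
    next
      case (add x y)
      from add.hyps(2) have y: "y \<in> H \<or> y - a \<in> H" using Kdef by auto
      show ?case
      proof (cases "x \<in> H")
        case True
        then show ?thesis using y Hadd[of x y] Hadd[of x "y - a"] by (auto simp: algebra_simps)
      next
        case False
        note xF = False
        show ?thesis
        proof (cases "x - a \<in> H")
          case True
          then show ?thesis using y Hadd[of "x - a" y] Hadd[of "x - a" "y - a"]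
            by (auto simp: algebra_simps)
        next
          case False
          then have x2: "x - 2*a \<in> H" using add.IH xF by auto
          show ?thesis
          proof (cases "y \<in> H")
            case True then show ?thesis using x2 Hadd[of "x - 2*a" y] by (auto simp: algebra_simps)
          next
            case False
            then have "y - a \<in> H" using y by auto
            then have "(x - 2*a) + (y - a) + 3*a \<in> H" using x2 a3 Hadd by blast
            then show ?thesis by (simp add: algebra_simps)
          qed
        qed
      qed
    qed
  qed
  have SK2: "Svals as \<subseteq> Kvals as" if a2: "2*a \<in> H"
  proof
    fix x assume "x \<in> Svals as"
    then have "x \<in> gen_monoid (Kvals as)" by (simp add: Svals_def)
    then show "x \<in> Kvals as"
    proof (induction x rule: gen_monoid.induct)
      case zero then show ?case using HK H0 by simp
    next
      case (add x y)
      from add.hyps(2) have y: "y \<in> H \<or> y - a \<in> H" using Kdef by auto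
      from add.IH have x: "x \<in> H \<or> x - a \<in> H" using Kdef by auto
      have "x + y \<in> H \<or> x + y - a \<in> H"
      proof (cases "x \<in> H")
        case True
        then show ?thesis using y Hadd[of x y] Hadd[of x "y - a"] by (auto simp: algebra_simps)
      next
        case False
        then have xa: "x - a \<in> H" using x by auto
        show ?thesis
        proof (cases "y \<in> H")
          case True then show ?thesis using xa Hadd[of "x - a" y] by (auto simp: algebra_simps)
        next
          case False
          then have "y - a \<in> H" using y by auto
          then have "(x - a) + (y - a) + 2*a \<in> H" using xa a2 Hadd by blast
          then show ?thesis by (simp add: algebra_simps)
        qed
      qed
      then show ?case using HK aK[of "x + y - a"] by auto
    qed
  qed
  have threeF: False if card2: "card (Svals as - Kvals as) = 2"
      and xyz: "x \<in> Svals as - Kvals as" "y \<in> Svals as - Kvals as" "z \<in> Svals as - Kvals as"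
      and d: "x \<noteq> y" "y \<noteq> z" "x \<noteq> z" for x y z
  proof -
    have fin: "finite (Svals as - Kvals as)" by (rule card_ge_0_finite) (simp add: card2)
    have sub: "{x,y,z} \<subseteq> Svals as - Kvals as" using xyz by blast
    have c3: "card {x,y,z} = 3" using d by simp
    have "card {x,y,z} \<le> card (Svals as - Kvals as)" by (rule card_mono[OF fin sub])
    then show False using c3 card2 by linarith
  qed
  show ?thesis
  proof
    assume agl: "two_AGL as"
    then have card2: "card (Svals as - Kvals as) = 2" by (simp add: two_AGL_def)
    define b where "b = f - 2*a"
    have bH: "b \<in> H"
    proof (rule ccontr)
      assume "b \<notin> H"
      then have "2*a \<in> Kvals as" using inK b_def by simp
      then have "2*a \<in> H" using Kdef aH by auto
      then have "Svals as - Kvals as = {}" using SK2 by blast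
      then have "card (Svals as - Kvals as) = 0" by (simp only: card.empty)
      then show False using card2 by linarith
    qed
    have fb: "f = 2*a + b" using b_def by simp
    have in2a: "2*a \<in> Svals as - Kvals as" using S2[OF H0] notK bH b_def by simp
    have inf: "f \<in> Svals as - Kvals as" using S2[OF bH] notK[of f] H0 fb by simp
    have b0: "b \<noteq> 0"
    proof
      assume b0: "b = 0"
      have a3: "3*a \<in> H" using fabove a0 fb b0 by simp
      have "Svals as - Kvals as \<subseteq> {2*a}"
      proof
        fix x assume x: "x \<in> Svals as - Kvals as"
        then have fx: "f - x \<in> H" using inK by blast
        have "x \<notin> H" "x - a \<notin> H" using x HK aK[of "x - a"] by auto
        then have "x - 2*a \<in> H" using ST[OF a3] x by auto
        then show "x \<in> {2*a}" using fx fb b0 Hnn[of "x - 2*a"] Hnn[of "f - x"] by simp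
      qed
      then have "card (Svals as - Kvals as) \<le> 1"
        using card_mono[of "{2*a}"] by fastforce
      then show False using card2 by simp
    qed
    have atom: "\<forall>h\<in>sgp as. b - h \<in> sgp as \<longrightarrow> h = 0 \<or> h = b"
    proof (intro ballI impI)
      fix h assume h: "h \<in> sgp as" "b - h \<in> sgp as"
      show "h = 0 \<or> h = b"
      proof (rule ccontr)
        assume nh: "\<not> (h = 0 \<or> h = b)"
        have hH: "h \<in> H" "b - h \<in> H" using h H_def by auto
        have e: "f - (2*a + h) = b - h" using fb by simp
        have "2*a + h \<in> Svals as - Kvals as" using S2[OF hH(1)] notK[of "2*a+h"] hH(2) e by simp
        then show False by (rule threeF[OF card2 in2a _ inf]) (use nh b0 fb in auto)
      qed
    qed
    obtain i where i: "i < length as" "b = int (as!i)"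
    proof -
      have bS: "b \<in> sgp as" using bH H_def by simp
      show ?thesis using atom_gen[OF pos bS b0 atom] that by blast
    qed
    have a3: "3*a \<in> H"
    proof (rule ccontr)
      assume n3: "3*a \<notin> H"
      have "3*a \<notin> Kvals as"
      proof
        assume "3*a \<in> Kvals as"
        then obtain h where "h \<in> H" "3*a = a + h" using Kdef n3 by auto
        then have "2*a \<in> H" by simp
        then show False using in2a HK by auto
      qed
      then have "3*a \<in> Svals as - Kvals as" using S3 by simp
      moreover have "3*a \<noteq> f" using fb aH bH by auto
      moreover have "3*a \<noteq> 2*a" using a0 by simp
      moreover have "2*a \<noteq> f" using b0 fb by simp
      ultimately show False by (intro threeF[OF card2 in2a _ inf]) auto
    qed
    show "3 * (frob as - c) \<in> sgp as \<and>
           (\<exists>i<length as. frob as = 2 * (frob as - c) + int (as ! i))"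
    proof -
      have e1: "3 * (frob as - c) = 3*a" unfolding a_def f_def by simp
      have e2: "frob as = 2 * (frob as - c) + int (as ! i)"
        unfolding f_def[symmetric] a_def[symmetric] using fb i(2) by simp
      show ?thesis unfolding e1 using a3 H_def e2 i(1) by blast
    qed
  next
    assume rhs: "3 * (frob as - c) \<in> sgp as \<and>
           (\<exists>i<length as. frob as = 2 * (frob as - c) + int (as ! i))"
    have e1: "3 * (frob as - c) = 3*a" unfolding a_def f_def by simp
    have a3: "3*a \<in> H" using rhs unfolding e1 H_def by blast
    obtain i where i0: "i < length as" "frob as = 2 * (frob as - c) + int (as ! i)"
      using rhs by blast
    have i: "i < length as" "f = 2*a + int (as!i)" using i0 a_def f_def by auto
    have aiH: "int (as!i) \<in> H" using sgp_gen[OF i(1)] H_def by simp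
    have "Svals as - Kvals as = {2*a, f}"
    proof
      show "Svals as - Kvals as \<subseteq> {2*a, f}"
      proof
        fix x assume x: "x \<in> Svals as - Kvals as"
        then have fx: "f - x \<in> H" using inK by blast
        have "x \<notin> H" "x - a \<notin> H" using x HK aK[of "x - a"] by auto
        then have x2: "x - 2*a \<in> H" using ST[OF a3] x by auto
        have "int (as!i) - (x - 2*a) \<in> sgp as" using fx i(2) H_def by (simp add: algebra_simps)
        then have "x - 2*a = 0 \<or> x - 2*a = int (as!i)"
          using gen_atom[OF i(1) _ _] minimal i(1) x2 H_def by blast
        then show "x \<in> {2*a, f}" using i(2) by auto
      qed
    next
      show "{2*a, f} \<subseteq> Svals as - Kvals as"
        using S2[OF H0] S2[OF aiH] notK[of "2*a"] notK[of f] i(2) aiH H0 by auto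
    qed
    moreover have "2*a \<noteq> f" using i pos by force
    ultimately show "two_AGL as" by (simp add: two_AGL_def)
  qed
qed

end
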